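(* There is a constant $c_1>0$ such that for all $n>5$, $$h_3(n,\{(4,0),(4,2)\}) > c_1\, n^{1/5}.$$ That is, every $n$-vertex $3$-graph in which every four vertices span $1$, $3$ or $4$ edges has a clique or coclique of size greater than $c_1 n^{1/5}$.
   Context: For an $r$-uniform hypergraph ($r$-graph) $H$, a homogeneous set is a set of vertices that is either a clique (every $r$-subset is an edge) or a coclique (no $r$-subset is an edge); $h(H)$ denotes the size of a largest homogeneous set. An $(m,f)$-graph is an $r$-graph with $m$ vertices and $f$ edges; $H$ is $(m,f)$-free if it contains no induced sub-hypergraph that is an $(m,f)$-graph. For a set $Q$ of pairs $(m,f)$, $H$ is $Q$-free if it is $(m,f)$-free for every $(m,f)\in Q$. $h_r(n,Q)$ is the minimum of $h(H)$ over all $n$-vertex $Q$-free $r$-graphs $H$. *)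

theory Defs
  imports Complex_Main
begin

definition r_graph :: "nat \<Rightarrow> 'a set \<Rightarrow> 'a set set \<Rightarrow> bool" where
  "r_graph r V E \<longleftrightarrow> finite V \<and> (\<forall>e\<in>E. e \<subseteq> V \<and> card e = r)"

definition homogeneous :: "nat \<Rightarrow> 'a set \<Rightarrow> 'a set set \<Rightarrow> 'a set \<Rightarrow> bool" where
  "homogeneous r V E S \<longleftrightarrow> S \<subseteq> V \<and>
     ((\<forall>T. T \<subseteq> S \<and> card T = r \<longrightarrow> T \<in> E) \<or> (\<forall>T. T \<subseteq> S \<and> card T = r \<longrightarrow> T \<notin> E))"

definition hom_num :: "nat \<Rightarrow> 'a set \<Rightarrow> 'a set set \<Rightarrow> nat" where
  "hom_num r V E = Max {card S | S. homogeneous r V E S}"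

definition has_induced :: "'a set \<Rightarrow> 'a set set \<Rightarrow> nat \<times> nat \<Rightarrow> bool" where
  "has_induced V E mf \<longleftrightarrow>
     (\<exists>S. S \<subseteq> V \<and> card S = fst mf \<and> card {e\<in>E. e \<subseteq> S} = snd mf)"

definition Q_free :: "'a set \<Rightarrow> 'a set set \<Rightarrow> (nat \<times> nat) set \<Rightarrow> bool" where
  "Q_free V E Q \<longleftrightarrow> (\<forall>mf\<in>Q. \<not> has_induced V E mf)"

text \<open>h_r(n,Q): minimum of h(H) over n-vertex Q-free r-graphs (vertex set {0..<n}, WLOG).\<close>
definition h_rnQ :: "nat \<Rightarrow> nat \<Rightarrow> (nat \<times> nat) set \<Rightarrow> nat" where
  "h_rnQ r n Q = Min {hom_num r {0..<n} E | E. r_graph r {0..<n} E \<and> Q_free {0..<n} E Q}"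

end

theory Submission
  imports Defs
begin

lemma card_filter4:
  assumes "distinct [T1,T2,T3,T4]"
  shows "card {T \<in> {T1,T2,T3,T4}. P T} = of_bool (P T1) + of_bool (P T2) + of_bool (P T3) + of_bool (P T4)"
proof -
  have ins: "\<And>a A. {x \<in> insert a A. P x} = (if P a then insert a {x\<in>A. P x} else {x\<in>A. P x})" by auto
  have e: "{x \<in> {}. P x} = {}" by simp
  show ?thesis using assms by (simp only: ins e) simp
qed

lemma sub3_of_4:
  assumes "distinct [a,b,c,d]" "e \<subseteq> {a,b,c,d}" "card e = 3"
  shows "e \<in> {{a,b,c},{a,b,d},{a,c,d},{b,c,d}}"
proof -
  have f: "finite {a,b,c,d}" by simp
  have c4: "card {a,b,c,d} = 4" using assms(1) by simp
  have "card ({a,b,c,d} - e) = 1" using card_Diff_subset[OF finite_subset[OF assms(2) f] assms(2)] c4 assms(3) by simp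
  then obtain w where w: "{a,b,c,d} - e = {w}" using card_1_singletonE by blast
  have we: "e = {a,b,c,d} - {w}" using w assms(2) by blast
  have "w \<in> {a,b,c,d}" using w by blast
  then show ?thesis using assms(1) we by auto
qed

lemma real_fin: 
  fixes n h :: nat assumes "n \<le> h + h*h*h" "n > 0"
  shows "(1/2::real) * real n powr (1/5) < real h"
proof -
  have h1: "h \<ge> 1" using assms by (cases h) auto
  have "real n \<le> 2 * real h ^ 3"
  proof -
    have "h \<le> h*h*h" using h1 by (metis le_square mult_le_mono1 order_trans mult.commute)
    then have "n \<le> 2 * (h*h*h)" using assms by linarith
    then show ?thesis by (simp add: power3_eq_cube) (metis of_nat_le_iff of_nat_mult of_nat_numeral)
  qed
  also have "\<dots> < (2 * real h) ^ 5" using h1 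
  proof -
    have "real h ^3 \<le> real h ^ 5" using h1 by (simp add: power_increasing)
    moreover have "real h ^ 5 > 0" using h1 by simp
    moreover have "(2*real h)^5 = 32 * real h^5" by (simp add: power_mult_distrib)
    ultimately show ?thesis by linarith
  qed
  finally have lt: "real n < (2 * real h) ^ 5" .
  have "real n powr (1/5) < ((2 * real h) ^ 5) powr (1/5)"
    using lt by (intro powr_less_mono2) auto
  also have "\<dots> = 2 * real h"
  proof -
    have p: "2 * real h > 0" using h1 by simp
    have "(2 * real h) ^ 5 = (2 * real h) powr (real 5)" using powr_realpow[OF p, of 5] by simp
    then have "((2 * real h) ^ 5) powr (1/5) = (2 * real h) powr (real 5 * (1/5))" by (simp only: powr_powr)
    also have "\<dots> = 2 * real h" using p by simp
    finally show ?thesis .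
  qed
  finally show ?thesis by simp
qed

lemma neq_by: "x \<in> A \<Longrightarrow> x \<notin> B \<Longrightarrow> A \<noteq> B" by blast

lemma count4:
  assumes E: "\<forall>e\<in>E. card e = 3" and d: "distinct [a,b,c,d]"
  shows "card {e\<in>E. e \<subseteq> {a,b,c,d}} = of_bool ({a,b,c}\<in>E) + of_bool ({a,b,d}\<in>E) + of_bool ({a,c,d}\<in>E) + of_bool ({b,c,d}\<in>E)"
proof -
  have eq: "{e\<in>E. e \<subseteq> {a,b,c,d}} = {T \<in> {{a,b,c},{a,b,d},{a,c,d},{b,c,d}}. T \<in> E}"
    using sub3_of_4[OF d] E by auto
  have dd: "distinct [{a,b,c},{a,b,d},{a,c,d},{b,c,d}]"
  proof -
    have 1: "{a,b,c} \<noteq> {a,b,d}" by (rule neq_by[of c]; use d in auto)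
    have 2: "{a,b,c} \<noteq> {a,c,d}" by (rule neq_by[of b]; use d in auto)
    have 3: "{a,b,c} \<noteq> {b,c,d}" by (rule neq_by[of a]; use d in auto)
    have 4: "{a,b,d} \<noteq> {a,c,d}" by (rule neq_by[of b]; use d in auto)
    have 5: "{a,b,d} \<noteq> {b,c,d}" by (rule neq_by[of a]; use d in auto)
    have 6: "{a,c,d} \<noteq> {b,c,d}" by (rule neq_by[of a]; use d in auto)
    show ?thesis unfolding distinct.simps list.set insert_iff empty_iff using 1 2 3 4 5 6 by metis
  qed
  show ?thesis unfolding eq by (rule card_filter4[OF dd, of "\<lambda>T. T \<in> E"])
qed

definition hclq :: "'a set \<Rightarrow> 'a set set \<Rightarrow> 'a set \<Rightarrow> bool" where
  "hclq V E S \<longleftrightarrow> S \<subseteq> V \<and> (\<forall>T. T \<subseteq> S \<and> card T = 3 \<longrightarrow> T \<in> E)"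

context
  fixes V :: "'a set" and E :: "'a set set"
  assumes rg: "r_graph 3 V E" and qf: "Q_free V E {(4,0),(4,2)}"
begin

lemma four:
  assumes "a\<in>V" "b\<in>V" "c\<in>V" "d\<in>V" "distinct [a,b,c,d]"
  shows "of_bool ({a,b,c}\<in>E) + of_bool ({a,b,d}\<in>E) + of_bool ({a,c,d}\<in>E) + of_bool ({b,c,d}\<in>E) \<noteq> (0::nat)
    \<and> of_bool ({a,b,c}\<in>E) + of_bool ({a,b,d}\<in>E) + of_bool ({a,c,d}\<in>E) + of_bool ({b,c,d}\<in>E) \<noteq> (2::nat)"
proof -
  have S: "{a,b,c,d} \<subseteq> V" "card {a,b,c,d} = 4" using assms by auto
  have E3: "\<forall>e\<in>E. card e = 3" using rg unfolding r_graph_def by blast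
  have "\<not> has_induced V E (4,0)" "\<not> has_induced V E (4,2)" using qf unfolding Q_free_def by auto
  then have "card {e\<in>E. e \<subseteq> {a,b,c,d}} \<noteq> 0" "card {e\<in>E. e \<subseteq> {a,b,c,d}} \<noteq> 2"
    using S unfolding has_induced_def by (metis fst_conv snd_conv)+
  then show ?thesis using count4[OF E3 assms(5)] by simp
qed

lemma codeg:
  assumes y: "y\<in>V" and z: "z\<in>V" and yz: "y\<noteq>z"
  defines "N \<equiv> {x\<in>V. x\<noteq>y \<and> x\<noteq>z \<and> {x,y,z}\<notin>E}"
  shows "hclq V E (insert y N) \<or> hclq V E (insert z N)"
proof -
  have NV: "\<And>l. l \<in> N \<Longrightarrow> l \<in> V \<and> l \<noteq> y \<and> l \<noteq> z \<and> {l,y,z} \<notin> E" unfolding N_def by blast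
  have F: "\<And>l l'. l\<in>N \<Longrightarrow> l'\<in>N \<Longrightarrow> l\<noteq>l' \<Longrightarrow> ({y,l,l'}\<in>E \<longleftrightarrow> {z,l,l'}\<notin>E)"
  proof -
    fix l l' assume l: "l\<in>N" "l'\<in>N" "l\<noteq>l'"
    have "{y,z,l} \<notin> E" "{y,z,l'} \<notin> E" using NV[OF l(1)] NV[OF l(2)] by (auto simp: insert_commute)
    moreover have "distinct [y,z,l,l']" using NV[OF l(1)] NV[OF l(2)] l yz by auto
    ultimately show "({y,l,l'}\<in>E \<longleftrightarrow> {z,l,l'}\<notin>E)"
      using four[of y z l l'] NV[OF l(1)] NV[OF l(2)] y z by (auto simp: of_bool_def split: if_splits)
  qed
  show ?thesis
  proof (cases "\<forall>l\<in>N. \<forall>l'\<in>N. l\<noteq>l' \<longrightarrow> {y,l,l'}\<in>E")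
    case A: True
    have "hclq V E (insert y N)" unfolding hclq_def
    proof (intro conjI allI impI)
      show "insert y N \<subseteq> V" using y NV by auto
      fix T assume T: "T \<subseteq> insert y N \<and> card T = 3"
      then obtain p q r where T': "T = {p,q,r}" "p\<noteq>q" "q\<noteq>r" "p\<noteq>r" by (auto simp: card_3_iff)
      have pqr: "p \<in> insert y N" "q \<in> insert y N" "r \<in> insert y N" using T T' by auto
      show "T \<in> E"
      proof (cases "p = y \<or> q = y \<or> r = y")
        case True then show ?thesis using A pqr T' by (auto simp: insert_commute)
      next
        case False
        then have pN: "p\<in>N" "q\<in>N" "r\<in>N" using pqr by auto
        have "{z,p,q}\<notin>E" "{z,p,r}\<notin>E" "{z,q,r}\<notin>E" using F A pN T' by blast+
        moreover have "distinct [z,p,q,r]" using NV pN T' by auto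
        ultimately show ?thesis using four[of z p q r] NV pN z T' by (auto simp: of_bool_def split: if_splits)
      qed
    qed
    then show ?thesis by blast
  next
    case False
    then obtain l1 l2 where l12: "l1\<in>N" "l2\<in>N" "l1\<noteq>l2" "{y,l1,l2}\<notin>E" by blast
    have prp: "\<And>a b c. a\<in>N \<Longrightarrow> b\<in>N \<Longrightarrow> c\<in>N \<Longrightarrow> distinct [a,b,c] \<Longrightarrow> {y,a,b}\<notin>E \<Longrightarrow> {y,a,c}\<notin>E"
    proof (rule ccontr)
      fix a b c assume abc: "a\<in>N" "b\<in>N" "c\<in>N" "distinct [a,b,c]" "{y,a,b}\<notin>E" and "\<not> {y,a,c}\<notin>E"
      then have yac: "{y,a,c}\<in>E" by simp
      have f1: "{z,a,b}\<in>E" using F abc by auto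
      have f2: "{z,a,c}\<notin>E" using F abc yac by auto
      have f3: "{y,b,c}\<in>E \<longleftrightarrow> {z,b,c}\<notin>E" using F abc by auto
      have d1: "distinct [y,a,b,c]" "distinct [z,a,b,c]" using NV abc by auto
      show False using four[OF y _ _ _ d1(1)] four[OF z _ _ _ d1(2)] NV abc f1 f2 f3 yac
        by (auto simp: of_bool_def split: if_splits)
    qed
    have allred: "\<And>p q. p\<in>N \<Longrightarrow> q\<in>N \<Longrightarrow> p\<noteq>q \<Longrightarrow> {y,p,q}\<notin>E"
    proof -
      fix p q assume pq: "p\<in>N" "q\<in>N" "p\<noteq>q"
      have r21: "{y,l2,l1}\<notin>E" using l12 by (simp add: insert_commute)
      have rp: "{y,p,l1}\<notin>E" if "p \<noteq> l1"
      proof (cases "p = l2")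
        case True then show ?thesis using r21 by simp
      next
        case False
        then have "{y,l1,p}\<notin>E" using prp[of l1 l2 p] l12 pq that by auto
        then show ?thesis by (simp add: insert_commute)
      qed
      show "{y,p,q}\<notin>E"
      proof (cases "p = l1")
        case True
        then show ?thesis using prp[of l1 l2 q] l12 pq r21 by (cases "q = l2") auto
      next
        case False
        then show ?thesis using prp[of p l1 q] rp[OF False] l12 pq by (cases "q = l1") auto
      qed
    qed
    have "hclq V E (insert z N)" unfolding hclq_def
    proof (intro conjI allI impI)
      show "insert z N \<subseteq> V" using z NV by auto
      fix T assume T: "T \<subseteq> insert z N \<and> card T = 3"
      then obtain p q r where T': "T = {p,q,r}" "p\<noteq>q" "q\<noteq>r" "p\<noteq>r" by (auto simp: card_3_iff)
      have pqr: "p \<in> insert z N" "q \<in> insert z N" "r \<in> insert z N" using T T' by auto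
      have zin: "\<And>l l'. l\<in>N \<Longrightarrow> l'\<in>N \<Longrightarrow> l\<noteq>l' \<Longrightarrow> {z,l,l'}\<in>E" using F allred by blast
      show "T \<in> E"
      proof (cases "p = z \<or> q = z \<or> r = z")
        case True then show ?thesis using zin pqr T' by (auto simp: insert_commute)
      next
        case False
        then have pN: "p\<in>N" "q\<in>N" "r\<in>N" using pqr by auto
        have "{y,p,q}\<notin>E" "{y,p,r}\<notin>E" "{y,q,r}\<notin>E" using allred pN T' by blast+
        moreover have "distinct [y,p,q,r]" using NV pN T' by auto
        ultimately show ?thesis using four[of y p q r] NV pN y T' by (auto simp: of_bool_def split: if_splits)
      qed
    qed
    then show ?thesis by blast
  qed
qed


lemma hom_le:
  assumes "homogeneous 3 V E S" shows "card S \<le> hom_num 3 V E"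
proof -
  have fV: "finite V" using rg unfolding r_graph_def by blast
  have "{card S |S. homogeneous 3 V E S} \<subseteq> card ` Pow V" unfolding homogeneous_def by auto
  then have "finite {card S |S. homogeneous 3 V E S}" using fV finite_subset by blast
  then show ?thesis unfolding hom_num_def using assms by (intro Max_ge) auto
qed

lemma hclq_hom: "hclq V E S \<Longrightarrow> homogeneous 3 V E S"
  unfolding hclq_def homogeneous_def by blast

lemma main_bound: "card V \<le> hom_num 3 V E + hom_num 3 V E * hom_num 3 V E * hom_num 3 V E"
proof -
  define h where "h = hom_num 3 V E"
  have fV: "finite V" using rg unfolding r_graph_def by blast
  define Cl where "Cl = {card S |S. hclq V E S}"
  have "Cl \<subseteq> card ` Pow V" unfolding Cl_def hclq_def by auto
  then have fCl: "finite Cl" using fV finite_subset by blast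
  have "hclq V E {}" unfolding hclq_def by auto
  then have "Cl \<noteq> {}" unfolding Cl_def by blast
  then have "Max Cl \<in> Cl" using fCl by simp
  then obtain S where S: "hclq V E S" "card S = Max Cl" unfolding Cl_def by auto
  have Smax: "\<And>S'. hclq V E S' \<Longrightarrow> card S' \<le> card S" proof -
    fix S' assume "hclq V E S'"
    then have "card S' \<in> Cl" unfolding Cl_def by blast
    then show "card S' \<le> card S" using S(2) fCl by simp
  qed
  have SV: "S \<subseteq> V" using S unfolding hclq_def by blast
  have fS: "finite S" using SV fV finite_subset by blast
  have cS: "card S \<le> h" unfolding h_def using hom_le[OF hclq_hom[OF S(1)]] .
  define N where "N = (\<lambda>(y,z). {x\<in>V. x\<noteq>y \<and> x\<noteq>z \<and> {x,y,z}\<notin>E})"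
  define Off where "Off = {(y,z). y\<in>S \<and> z\<in>S \<and> y\<noteq>z}"
  have cover: "V - S \<subseteq> (\<Union>p\<in>Off. N p)"
  proof
    fix x assume x: "x \<in> V - S"
    have "card (insert x S) = card S + 1" using x fS by simp
    then have "\<not> hclq V E (insert x S)" using Smax by fastforce
    then obtain T where T: "T \<subseteq> insert x S" "card T = 3" "T \<notin> E" using x SV unfolding hclq_def by auto
    have xT: "x \<in> T"
    proof (rule ccontr)
      assume "x \<notin> T" then have "T \<subseteq> S" using T by blast
      then show False using S(1) T unfolding hclq_def by blast
    qed
    have fT: "finite T" using T(2) card_gt_0_iff by fastforce
    have "card (T - {x}) = 2" using T(2) xT fT by simp
    then obtain y z where yz: "T - {x} = {y,z}" "y \<noteq> z" by (auto simp: card_2_iff)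
    have TT: "T = {x,y,z}" using yz xT by blast
    have "y \<in> S" "z \<in> S" "y \<noteq> x" "z \<noteq> x" using yz T(1) by blast+
    then show "x \<in> (\<Union>p\<in>Off. N p)" using x T(3) TT yz(2) unfolding Off_def N_def by auto
  qed
  have cN: "card (N p) \<le> h" if p: "p \<in> Off" for p
  proof -
    obtain y z where pyz: "p = (y,z)" "y\<in>S" "z\<in>S" "y\<noteq>z" using p unfolding Off_def by auto
    have Np: "N p = {x\<in>V. x\<noteq>y \<and> x\<noteq>z \<and> {x,y,z}\<notin>E}" using pyz unfolding N_def by simp
    have fN: "finite (N p)" using fV unfolding Np by simp
    have "hclq V E (insert y (N p)) \<or> hclq V E (insert z (N p))"
      unfolding Np using codeg pyz SV by blast
    moreover have "card (insert y (N p)) = card (N p) + 1" "card (insert z (N p)) = card (N p) + 1"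
      using fN unfolding Np by auto
    ultimately show ?thesis using hom_le[OF hclq_hom] unfolding h_def by fastforce
  qed
  have fOff: "finite Off"
  proof (rule finite_subset)
    show "Off \<subseteq> S \<times> S" unfolding Off_def by auto
    show "finite (S \<times> S)" using fS by simp
  qed
  have cOff: "card Off \<le> card S * card S"
  proof -
    have "Off \<subseteq> S \<times> S" unfolding Off_def by auto
    then have "card Off \<le> card (S \<times> S)" using fS by (intro card_mono) auto
    then show ?thesis by (simp add: card_cartesian_product)
  qed
  have "card (V - S) \<le> card (\<Union>p\<in>Off. N p)"
    using cover fV fOff by (intro card_mono) (auto simp: N_def)
  also have "\<dots> \<le> (\<Sum>p\<in>Off. card (N p))" using fOff by (rule card_UN_le)
  also have "\<dots> \<le> card Off * h" using cN sum_bounded_above[of Off "\<lambda>p. card (N p)" h] by simp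
  also have "\<dots> \<le> card S * card S * h" using cOff by simp
  also have "\<dots> \<le> h * h * h" using cS by (simp add: mult_mono)
  finally have "card (V - S) \<le> h*h*h" .
  moreover have "card V = card S + card (V - S)" using SV fV by (metis card_Diff_subset fS card_mono le_add_diff_inverse)
  ultimately show ?thesis using cS unfolding h_def by linarith
qed

end

theorem mainTheorem4:
  shows "\<exists>c1::real. c1 > 0 \<and>
    (\<forall>n::nat. n > 5 \<longrightarrow> real (h_rnQ 3 n {(4,0),(4,2)}) > c1 * real n powr (1/5))"
proof (intro exI[of _ "1/2"] conjI allI impI)
  show "(1/2::real) > 0" by simp
  fix n :: nat assume n: "n > 5"
  define V where "V = {0..<n}"
  define A where "A = {hom_num 3 V E | E. r_graph 3 V E \<and> Q_free V E {(4,0),(4,2)}}"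
  have hA: "h_rnQ 3 n {(4,0),(4,2)} = Min A" unfolding h_rnQ_def A_def V_def ..
  have "A \<subseteq> hom_num 3 V ` Pow (Pow V)" unfolding A_def r_graph_def by auto
  then have fA: "finite A" by (rule finite_subset) (simp add: V_def)
  define E0 where "E0 = {T. T \<subseteq> V \<and> card T = 3}"
  have rg0: "r_graph 3 V E0" unfolding r_graph_def E0_def V_def by auto
  have qf0: "Q_free V E0 {(4,0),(4,2)}" unfolding Q_free_def has_induced_def
  proof (clarify)
    fix a b S assume ab: "(a, b) \<in> {(4::nat, 0::nat), (4, 2)}" and S: "S \<subseteq> V" "card S = fst (a,b)"
      "card {e \<in> E0. e \<subseteq> S} = snd (a,b)"
    have "{e \<in> E0. e \<subseteq> S} = {B. B \<subseteq> S \<and> card B = 3}" unfolding E0_def using S by auto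
    moreover have "finite S" using S(1) finite_subset unfolding V_def by blast
    ultimately have "card {e \<in> E0. e \<subseteq> S} = card S choose 3" by (simp add: n_subsets)
    then show False using ab S by (auto simp: numeral_eq_Suc)
  qed
  have "A \<noteq> {}" unfolding A_def using rg0 qf0 by blast
  then have "Min A \<in> A" using fA by simp
  then obtain E where E: "r_graph 3 V E" "Q_free V E {(4,0),(4,2)}" "Min A = hom_num 3 V E" unfolding A_def by auto
  have "card V \<le> hom_num 3 V E + hom_num 3 V E * hom_num 3 V E * hom_num 3 V E"
    using main_bound[OF E(1) E(2)] .
  then have "n \<le> hom_num 3 V E + hom_num 3 V E * hom_num 3 V E * hom_num 3 V E" unfolding V_def by simp
  from real_fin[OF this] n have "(1/2::real) * real n powr (1/5) < real (hom_num 3 V E)" by simp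
  then show "(1/2::real) * real n powr (1/5) < real (h_rnQ 3 n {(4,0),(4,2)})" using hA E(3) by simp
qed

end
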